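(* Over the space of $n$-variate Fourier polynomials $f$ of degree at most $d$, \[\mathbb E f^4\preceq 9^d\,(\mathbb E f^2)^2,\] where the expectations are over the uniform distribution on $\{\pm1\}^n$.
   Context: An $n$-variate Fourier polynomial of degree at most $d$ is a function $f:\{\pm1\}^n\to\mathbb R$ of the form $f=\sum_{\alpha\subseteq[n],|\alpha|\le d}\hat f_\alpha\chi_\alpha$ with $\chi_\alpha(x)=\prod_{i\in\alpha}x_i$. Both $\mathbb E f^4$ and $(\mathbb E f^2)^2$ are viewed as polynomials in the real coefficients $\{\hat f_\alpha\}_{|\alpha|\le d}$, and $P\preceq Q$ means that $Q-P$ is a sum of squares of polynomials in these coefficients. *)

theory Defs
  imports Complex_Main "HOL-Library.FuncSet"
begin

type_synonym coeffs = "nat set \<Rightarrow> real"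

definition idx :: "nat \<Rightarrow> nat \<Rightarrow> nat set set" where
  "idx n d = {\<alpha>. \<alpha> \<subseteq> {0..<n} \<and> card \<alpha> \<le> d}"

definition cube :: "nat \<Rightarrow> (nat \<Rightarrow> real) set" where
  "cube n = ({0..<n} \<rightarrow>\<^sub>E {-1, 1})"

definition chi :: "nat set \<Rightarrow> (nat \<Rightarrow> real) \<Rightarrow> real" where
  "chi \<alpha> x = (\<Prod>i\<in>\<alpha>. x i)"

definition fourier :: "nat \<Rightarrow> nat \<Rightarrow> coeffs \<Rightarrow> (nat \<Rightarrow> real) \<Rightarrow> real" where
  "fourier n d c x = (\<Sum>\<alpha>\<in>idx n d. c \<alpha> * chi \<alpha> x)"

definition expect :: "nat \<Rightarrow> ((nat \<Rightarrow> real) \<Rightarrow> real) \<Rightarrow> real" where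
  "expect n g = (\<Sum>x\<in>cube n. g x) / 2 ^ n"

inductive poly_fun :: "nat set set \<Rightarrow> (coeffs \<Rightarrow> real) \<Rightarrow> bool" for I where
  const: "poly_fun I (\<lambda>c. a)"
| var: "\<alpha> \<in> I \<Longrightarrow> poly_fun I (\<lambda>c. c \<alpha>)"
| add: "poly_fun I p \<Longrightarrow> poly_fun I q \<Longrightarrow> poly_fun I (\<lambda>c. p c + q c)"
| mult: "poly_fun I p \<Longrightarrow> poly_fun I q \<Longrightarrow> poly_fun I (\<lambda>c. p c * q c)"

definition sos :: "nat set set \<Rightarrow> (coeffs \<Rightarrow> real) \<Rightarrow> bool" where
  "sos I p \<longleftrightarrow> (\<exists>qs. (\<forall>q\<in>set qs. poly_fun I q) \<and> (\<forall>c. p c = (\<Sum>q\<leftarrow>qs. (q c)^2)))"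

end

theory Submission
  imports Defs
begin

lemma cube_sum_Suc:
  "(\<Sum>x\<in>cube (Suc n). h x) = (\<Sum>x\<in>cube n. h (x(n:=1)) + h (x(n:=-1)))"
proof -
  have fin: "finite (cube n)" unfolding cube_def by (auto intro: finite_PiE)
  have "cube (Suc n) = (\<lambda>(y, g). g(n := y)) ` ({-1,1} \<times> cube n)"
    unfolding cube_def by (simp add: atLeast0_lessThan_Suc PiE_insert_eq)
  moreover have "inj_on (\<lambda>(y, g). g(n := y)) ({-1,1} \<times> cube n)"
    using inj_combinator[of n "{0..<n}" "\<lambda>_. {-1,1::real}"] unfolding cube_def by simp
  ultimately have "(\<Sum>x\<in>cube (Suc n). h x) = (\<Sum>p\<in>{-1,1} \<times> cube n. h ((snd p)(n := fst p)))"
    by (metis (no_types, lifting) sum.reindex_cong case_prod_beta)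
  also have "\<dots> = (\<Sum>y\<in>{-1,1::real}. \<Sum>x\<in>cube n. h (x(n:=y)))"
    by (subst sum.cartesian_product) (simp add: split_beta)
  also have "\<dots> = (\<Sum>x\<in>cube n. h (x(n:=1)) + h (x(n:=-1)))"
    by (simp add: sum.distrib algebra_simps)
  finally show ?thesis .
qed

lemma expect_Suc:
  "expect (Suc n) h = expect n (\<lambda>x. (h (x(n:=1)) + h (x(n:=-1))) / 2)"
  unfolding expect_def cube_sum_Suc by (simp add: sum_divide_distrib[symmetric])

lemma expect_0: "expect 0 h = h (\<lambda>_. undefined)"
  unfolding expect_def cube_def by simp

lemma pf_scale: "poly_fun I p \<Longrightarrow> poly_fun I (\<lambda>c. k * p c)"
  using poly_fun.mult[OF poly_fun.const] by blast

lemma pf_diff: "poly_fun I p \<Longrightarrow> poly_fun I q \<Longrightarrow> poly_fun I (\<lambda>c. p c - q c)"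
proof -
  assume "poly_fun I p" "poly_fun I q"
  hence "poly_fun I (\<lambda>c. p c + (-1) * q c)" by (intro poly_fun.add pf_scale)
  thus ?thesis by simp
qed

lemma pf_sum: "finite A \<Longrightarrow> (\<And>x. x \<in> A \<Longrightarrow> poly_fun I (p x)) \<Longrightarrow> poly_fun I (\<lambda>c. \<Sum>x\<in>A. p x c)"
proof (induction A rule: finite_induct)
  case empty then show ?case using poly_fun.const[of I 0] by simp
next
  case (insert a A) then show ?case by (simp add: poly_fun.add)
qed

lemma sos_cong: "sos I q \<Longrightarrow> (\<And>c. p c = q c) \<Longrightarrow> sos I p"
  unfolding sos_def by metis

lemma sos_zero: "sos I (\<lambda>c. 0)"
  unfolding sos_def by (rule exI[of _ "[]"]) simp

lemma sos_sq: "poly_fun I q \<Longrightarrow> sos I (\<lambda>c. (q c)^2)"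
  unfolding sos_def by (rule exI[of _ "[q]"]) simp

lemma sos_add: "sos I p \<Longrightarrow> sos I q \<Longrightarrow> sos I (\<lambda>c. p c + q c)"
  unfolding sos_def
proof -
  assume "\<exists>qs. (\<forall>q\<in>set qs. poly_fun I q) \<and> (\<forall>c. p c = (\<Sum>q\<leftarrow>qs. (q c)\<^sup>2))"
    and "\<exists>qs. (\<forall>q\<in>set qs. poly_fun I q) \<and> (\<forall>c. q c = (\<Sum>q\<leftarrow>qs. (q c)\<^sup>2))"
  then obtain ps qs where "\<forall>q\<in>set ps. poly_fun I q" "\<forall>c. p c = (\<Sum>q\<leftarrow>ps. (q c)\<^sup>2)"
    "\<forall>r\<in>set qs. poly_fun I r" "\<forall>c. q c = (\<Sum>r\<leftarrow>qs. (r c)\<^sup>2)" by blast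
  thus "\<exists>rs. (\<forall>q\<in>set rs. poly_fun I q) \<and> (\<forall>c. p c + q c = (\<Sum>q\<leftarrow>rs. (q c)\<^sup>2))"
    by (intro exI[of _ "ps @ qs"]) auto
qed

lemma sos_scale: "0 \<le> k \<Longrightarrow> sos I p \<Longrightarrow> sos I (\<lambda>c. k * p c)"
  unfolding sos_def
proof -
  assume k: "0 \<le> k" and "\<exists>qs. (\<forall>q\<in>set qs. poly_fun I q) \<and> (\<forall>c. p c = (\<Sum>q\<leftarrow>qs. (q c)\<^sup>2))"
  then obtain ps where ps: "\<forall>q\<in>set ps. poly_fun I q" "\<forall>c. p c = (\<Sum>q\<leftarrow>ps. (q c)\<^sup>2)" by blast
  have "k * p c = (\<Sum>q\<leftarrow>map (\<lambda>q c. sqrt k * q c) ps. (q c)\<^sup>2)" for c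
    using ps(2) k by (simp add: sum_list_const_mult[symmetric] o_def power_mult_distrib)
  thus "\<exists>rs. (\<forall>q\<in>set rs. poly_fun I q) \<and> (\<forall>c. k * p c = (\<Sum>q\<leftarrow>rs. (q c)\<^sup>2))"
    using ps(1) by (intro exI[of _ "map (\<lambda>q c. sqrt k * q c) ps"]) (auto intro: pf_scale)
qed

lemma sos_sum: "finite A \<Longrightarrow> (\<And>x. x \<in> A \<Longrightarrow> sos I (p x)) \<Longrightarrow> sos I (\<lambda>c. \<Sum>x\<in>A. p x c)"
proof (induction A rule: finite_induct)
  case empty then show ?case by (simp add: sos_zero)
next
  case (insert a A) then show ?case by (simp add: sos_add)
qed

lemma sos_list: "sos I p \<longleftrightarrow> (\<exists>qs. (\<forall>q\<in>set qs. poly_fun I q) \<and> (\<forall>c. p c = (\<Sum>q\<leftarrow>qs. (q c)^2)))"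
  unfolding sos_def ..

lemma sos_mult_list: "\<forall>q\<in>set ps. poly_fun I q \<Longrightarrow> sos I r \<Longrightarrow> sos I (\<lambda>c. (\<Sum>q\<leftarrow>ps. (q c)^2) * r c)"
proof (induction ps)
  case Nil then show ?case by (simp add: sos_zero)
next
  case (Cons p ps)
  from Cons.prems(2) obtain qs where qs: "\<forall>q\<in>set qs. poly_fun I q" "\<forall>c. r c = (\<Sum>q\<leftarrow>qs. (q c)\<^sup>2)"
    unfolding sos_def by blast
  have "sos I (\<lambda>c. \<Sum>q\<leftarrow>map (\<lambda>q c. p c * q c) qs. (q c)^2)"
    unfolding sos_def using qs(1) Cons.prems(1) by (intro exI[of _ "map (\<lambda>q c. p c * q c) qs"]) (auto intro: poly_fun.mult)
  hence A: "sos I (\<lambda>c. (p c)^2 * r c)"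
    by (rule sos_cong) (simp add: qs(2) o_def power_mult_distrib sum_list_const_mult)
  have B: "sos I (\<lambda>c. (\<Sum>q\<leftarrow>ps. (q c)^2) * r c)" using Cons by simp
  show ?case by (rule sos_cong[OF sos_add[OF A B]]) (simp add: algebra_simps)
qed

lemma sos_mult: "sos I p \<Longrightarrow> sos I q \<Longrightarrow> sos I (\<lambda>c. p c * q c)"
proof -
  assume "sos I p" "sos I q"
  then obtain ps where ps: "\<forall>q\<in>set ps. poly_fun I q" "\<forall>c. p c = (\<Sum>q\<leftarrow>ps. (q c)\<^sup>2)"
    unfolding sos_def by blast
  show ?thesis using sos_mult_list[OF ps(1) \<open>sos I q\<close>] by (rule sos_cong) (simp add: ps(2))
qed

definition Fp :: "nat \<Rightarrow> (nat set \<Rightarrow> coeffs \<Rightarrow> real) \<Rightarrow> coeffs \<Rightarrow> (nat \<Rightarrow> real) \<Rightarrow> real" where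
  "Fp n a c x = (\<Sum>\<alpha>\<in>Pow {0..<n}. a \<alpha> c * chi \<alpha> x)"

definition Wt :: "nat \<Rightarrow> (nat set \<Rightarrow> coeffs \<Rightarrow> real) \<Rightarrow> coeffs \<Rightarrow> real" where
  "Wt n a c = (\<Sum>\<alpha>\<in>Pow {0..<n}. 3 ^ card \<alpha> * (a \<alpha> c)^2)"

lemma sum_Pow_Suc:
  "(\<Sum>\<alpha>\<in>Pow {0..<Suc n}. g \<alpha>) = (\<Sum>\<alpha>\<in>Pow {0..<n}. g \<alpha>) + (\<Sum>\<alpha>\<in>Pow {0..<n}. g (insert n \<alpha>))"
proof -
  have inj: "inj_on (insert n) (Pow {0..<n})"
    by (rule inj_onI) (metis PowD atLeastLessThan_iff insert_ident less_irrefl subsetD)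
  have disj: "Pow {0..<n} \<inter> insert n ` Pow {0..<n} = {}" by auto
  have "(\<Sum>\<alpha>\<in>Pow {0..<Suc n}. g \<alpha>) = (\<Sum>\<alpha>\<in>Pow {0..<n} \<union> insert n ` Pow {0..<n}. g \<alpha>)"
    by (simp add: atLeast0_lessThan_Suc Pow_insert)
  also have "\<dots> = (\<Sum>\<alpha>\<in>Pow {0..<n}. g \<alpha>) + (\<Sum>\<alpha>\<in>insert n ` Pow {0..<n}. g \<alpha>)"
    by (rule sum.union_disjoint) (use disj in auto)
  also have "(\<Sum>\<alpha>\<in>insert n ` Pow {0..<n}. g \<alpha>) = (\<Sum>\<alpha>\<in>Pow {0..<n}. g (insert n \<alpha>))"
    by (simp add: sum.reindex[OF inj])
  finally show ?thesis .
qed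

lemma chi_insert: "\<alpha> \<in> Pow {0..<n} \<Longrightarrow> chi (insert n \<alpha>) y = y n * chi \<alpha> y"
proof -
  assume "\<alpha> \<in> Pow {0..<n}"
  hence "\<alpha> \<subseteq> {0..<n}" by simp
  hence "finite \<alpha>" "n \<notin> \<alpha>" using finite_subset by auto
  thus ?thesis unfolding chi_def by simp
qed

lemma card_insert_n: "\<alpha> \<in> Pow {0..<n::nat} \<Longrightarrow> card (insert n \<alpha>) = Suc (card \<alpha>)"
proof -
  assume "\<alpha> \<in> Pow {0..<n}"
  hence "\<alpha> \<subseteq> {0..<n}" by simp
  hence "finite \<alpha>" "n \<notin> \<alpha>" using finite_subset by auto
  thus ?thesis by simp
qed

lemma chi_upd: "\<alpha> \<in> Pow {0..<n} \<Longrightarrow> chi \<alpha> (x(n:=s)) = chi \<alpha> x"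
  unfolding chi_def by (rule prod.cong) auto

lemma Fp_Suc: "Fp (Suc n) a c y = Fp n a c y + y n * Fp n (\<lambda>\<alpha>. a (insert n \<alpha>)) c y"
  unfolding Fp_def sum_Pow_Suc sum_distrib_left
  by (auto intro!: sum.cong simp: chi_insert)

lemma Fp_upd: "Fp n a c (x(n:=s)) = Fp n a c x"
  unfolding Fp_def by (rule sum.cong) (auto simp: chi_upd)

lemma Wt_Suc: "Wt (Suc n) a c = Wt n a c + 3 * Wt n (\<lambda>\<alpha>. a (insert n \<alpha>)) c"
  unfolding Wt_def sum_Pow_Suc sum_distrib_left
  by (auto intro!: sum.cong simp: card_insert_n simp del: Pow_iff)

lemma Fp_Suc_upd: "Fp (Suc n) a c (x(n:=s)) = Fp n a c x + s * Fp n (\<lambda>\<alpha>. a (insert n \<alpha>)) c x"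
  by (simp add: Fp_Suc Fp_upd)

lemma expect_add: "expect n (\<lambda>x. p x + q x) = expect n p + expect n q"
  unfolding expect_def by (simp add: sum.distrib add_divide_distrib)

lemma expect_diff: "expect n (\<lambda>x. p x - q x) = expect n p - expect n q"
  unfolding expect_def by (simp add: sum_subtractf diff_divide_distrib)

lemma expect_cmult: "expect n (\<lambda>x. k * p x) = k * expect n p"
  unfolding expect_def by (simp add: sum_distrib_left[symmetric])

lemma pf_Fp: "(\<And>\<alpha>. poly_fun I (a \<alpha>)) \<Longrightarrow> poly_fun I (\<lambda>c. Fp n a c x)"
  unfolding Fp_def
proof (rule pf_sum)
  fix \<alpha> assume "\<And>\<alpha>. poly_fun I (a \<alpha>)"
  then show "poly_fun I (\<lambda>c. a \<alpha> c * chi \<alpha> x)"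
    using pf_scale[of I "a \<alpha>" "chi \<alpha> x"] by (simp add: mult.commute)
qed simp

lemma sos_Wt: "(\<And>\<alpha>. poly_fun I (a \<alpha>)) \<Longrightarrow> sos I (Wt n a)"
proof -
  assume "\<And>\<alpha>. poly_fun I (a \<alpha>)"
  hence "sos I (\<lambda>c. \<Sum>\<alpha>\<in>Pow {0..<n}. 3 ^ card \<alpha> * (a \<alpha> c)^2)"
    by (intro sos_sum sos_scale sos_sq) auto
  thus ?thesis by (rule sos_cong) (simp add: Wt_def)
qed

lemma sos_expect: "(\<And>x. poly_fun I (q x)) \<Longrightarrow> sos I (\<lambda>c. expect n (\<lambda>x. (q x c)^2))"
proof -
  assume "\<And>x. poly_fun I (q x)"
  hence "sos I (\<lambda>c. (1 / 2^n) * (\<Sum>x\<in>cube n. (q x c)^2))"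
    by (intro sos_scale sos_sum sos_sq) (auto simp: cube_def intro: finite_PiE)
  thus ?thesis by (rule sos_cong) (simp add: expect_def)
qed

lemma parseval: "expect n (\<lambda>x. (Fp n a c x)^2) = (\<Sum>\<alpha>\<in>Pow {0..<n}. (a \<alpha> c)^2)"
proof (induction n arbitrary: a)
  case 0 then show ?case by (simp add: expect_0 Fp_def chi_def)
next
  case (Suc n)
  let ?a' = "\<lambda>\<alpha>. a (insert n \<alpha>)"
  have "expect (Suc n) (\<lambda>x. (Fp (Suc n) a c x)^2)
      = expect n (\<lambda>x. (Fp n a c x)^2 + (Fp n ?a' c x)^2)"
    unfolding expect_Suc Fp_Suc_upd
    by (rule arg_cong[where f="expect n"], rule ext) (simp add: power2_eq_square field_simps)
  also have "\<dots> = (\<Sum>\<alpha>\<in>Pow {0..<Suc n}. (a \<alpha> c)^2)"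
    unfolding expect_add Suc sum_Pow_Suc ..
  finally show ?case .
qed

lemma main_ineq:
  "\<forall>a b. (\<forall>\<alpha>. poly_fun I (a \<alpha>)) \<longrightarrow> (\<forall>\<alpha>. poly_fun I (b \<alpha>)) \<longrightarrow>
     sos I (\<lambda>c. Wt n a c * Wt n b c - expect n (\<lambda>x. (Fp n a c x)^2 * (Fp n b c x)^2))"
proof (induction n)
  case 0 show ?case
    by (intro allI impI, rule sos_cong[OF sos_zero]) (simp add: expect_0 Fp_def Wt_def chi_def power2_eq_square)
next
  case (Suc n)
  show ?case
  proof (intro allI impI)
    fix a b :: "nat set \<Rightarrow> coeffs \<Rightarrow> real" assume pa: "\<forall>\<alpha>. poly_fun I (a \<alpha>)" and pb: "\<forall>\<alpha>. poly_fun I (b \<alpha>)"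
    define a' where "a' = (\<lambda>\<alpha>. a (insert n \<alpha>))"
    define b' where "b' = (\<lambda>\<alpha>. b (insert n \<alpha>))"
    have pa': "\<forall>\<alpha>. poly_fun I (a' \<alpha>)" and pb': "\<forall>\<alpha>. poly_fun I (b' \<alpha>)"
      using pa pb by (auto simp: a'_def b'_def)
    let ?S = "\<lambda>p q c. Wt n p c * Wt n q c - expect n (\<lambda>x. (Fp n p c x)^2 * (Fp n q c x)^2)"
    have S1: "sos I (?S a b)" using Suc pa pb by blast
    have S2: "sos I (?S a b')" using Suc pa pb' by blast
    have S3: "sos I (?S a' b)" using Suc pa' pb by blast
    have S4: "sos I (?S a' b')" using Suc pa' pb' by blast
    have S5: "sos I (\<lambda>c. Wt n a' c * Wt n b' c)"
      using pa' pb' by (intro sos_mult sos_Wt) auto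
    have S6: "sos I (\<lambda>c. expect n (\<lambda>x. (Fp n a c x * Fp n b' c x - Fp n a' c x * Fp n b c x)^2))"
      using pa pb pa' pb' by (intro sos_expect pf_diff poly_fun.mult pf_Fp) auto
    have "sos I (\<lambda>c. ?S a b c + (3 * ?S a b' c + (3 * ?S a' b c + (?S a' b' c +
        (8 * (Wt n a' c * Wt n b' c) + 2 * expect n (\<lambda>x. (Fp n a c x * Fp n b' c x - Fp n a' c x * Fp n b c x)^2))))))"
      by (intro sos_add sos_scale S1 S2 S3 S4 S5 S6) auto
    then show "sos I (\<lambda>c. Wt (Suc n) a c * Wt (Suc n) b c -
        expect (Suc n) (\<lambda>x. (Fp (Suc n) a c x)^2 * (Fp (Suc n) b c x)^2))"
    proof (rule sos_cong)
      fix c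
      have pt: "((Fp (Suc n) a c (x(n:=1)))^2 * (Fp (Suc n) b c (x(n:=1)))^2
              + (Fp (Suc n) a c (x(n:=-1)))^2 * (Fp (Suc n) b c (x(n:=-1)))^2) / 2
          = (Fp n a c x)^2 * (Fp n b c x)^2 + 3 * ((Fp n a c x)^2 * (Fp n b' c x)^2)
            + 3 * ((Fp n a' c x)^2 * (Fp n b c x)^2) + (Fp n a' c x)^2 * (Fp n b' c x)^2
            - 2 * (Fp n a c x * Fp n b' c x - Fp n a' c x * Fp n b c x)^2" for x
        unfolding Fp_Suc_upd a'_def b'_def by (simp add: power2_eq_square field_simps)
      show "Wt (Suc n) a c * Wt (Suc n) b c -
        expect (Suc n) (\<lambda>x. (Fp (Suc n) a c x)^2 * (Fp (Suc n) b c x)^2) =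
        ?S a b c + (3 * ?S a b' c + (3 * ?S a' b c + (?S a' b' c +
        (8 * (Wt n a' c * Wt n b' c) + 2 * expect n (\<lambda>x. (Fp n a c x * Fp n b' c x - Fp n a' c x * Fp n b c x)^2)))))"
        unfolding expect_Suc pt expect_add expect_diff expect_cmult Wt_Suc a'_def[symmetric] b'_def[symmetric]
        by (simp add: algebra_simps)
    qed
  qed
qed

theorem lemma5p1:
  fixes n d :: nat
  shows "sos (idx n d)
           (\<lambda>c. 9 ^ d * (expect n (\<lambda>x. (fourier n d c x)^2))^2
                - expect n (\<lambda>x. (fourier n d c x)^4))"
proof -
  let ?I = "idx n d"
  define a :: "nat set \<Rightarrow> coeffs \<Rightarrow> real" where "a = (\<lambda>\<alpha> c. if \<alpha> \<in> ?I then c \<alpha> else 0)"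
  have pa: "\<forall>\<alpha>. poly_fun ?I (a \<alpha>)"
  proof
    fix \<alpha> show "poly_fun ?I (a \<alpha>)"
    proof (cases "\<alpha> \<in> ?I")
      case True
      hence "a \<alpha> = (\<lambda>c. c \<alpha>)" by (simp add: a_def)
      thus ?thesis using poly_fun.var[OF True] by simp
    next
      case False
      hence "a \<alpha> = (\<lambda>c. 0)" by (simp add: a_def)
      thus ?thesis using poly_fun.const by simp
    qed
  qed
  have sub: "?I \<subseteq> Pow {0..<n}" by (auto simp: idx_def)
  have finI: "finite ?I" using sub finite_subset by blast
  have restr: "(\<Sum>\<alpha>\<in>Pow {0..<n}. (if \<alpha> \<in> ?I then g \<alpha> else 0)) = (\<Sum>\<alpha>\<in>?I. g \<alpha>)" for g :: "nat set \<Rightarrow> real"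
  proof -
    have "(\<Sum>\<alpha>\<in>Pow {0..<n}. (if \<alpha> \<in> ?I then g \<alpha> else 0)) = (\<Sum>\<alpha>\<in>Pow {0..<n} \<inter> ?I. g \<alpha>)"
      by (rule sum.inter_restrict[symmetric]) simp
    also have "Pow {0..<n} \<inter> ?I = ?I" using sub by blast
    finally show ?thesis .
  qed
  have F: "Fp n a c x = fourier n d c x" for c x
  proof -
    have "Fp n a c x = (\<Sum>\<alpha>\<in>Pow {0..<n}. (if \<alpha> \<in> ?I then c \<alpha> * chi \<alpha> x else 0))"
      unfolding Fp_def a_def by (rule sum.cong) auto
    thus ?thesis unfolding restr fourier_def .
  qed
 define S :: "coeffs \<Rightarrow> real" where "S = (\<lambda>c. \<Sum>\<alpha>\<in>?I. (c \<alpha>)^2)"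
  define W where "W = Wt n a"
  have E2: "expect n (\<lambda>x. (fourier n d c x)^2) = S c" for c
  proof -
    have "expect n (\<lambda>x. (fourier n d c x)^2) = (\<Sum>\<alpha>\<in>Pow {0..<n}. (a \<alpha> c)^2)"
      using parseval[of n a c] by (simp add: F)
    also have "\<dots> = (\<Sum>\<alpha>\<in>Pow {0..<n}. (if \<alpha> \<in> ?I then (c \<alpha>)^2 else 0))"
      unfolding a_def by (rule sum.cong) auto
    finally show ?thesis unfolding restr S_def .
  qed
  have Wexp: "W c = (\<Sum>\<alpha>\<in>?I. 3 ^ card \<alpha> * (c \<alpha>)^2)" for c
  proof -
    have "W c = (\<Sum>\<alpha>\<in>Pow {0..<n}. (if \<alpha> \<in> ?I then 3 ^ card \<alpha> * (c \<alpha>)^2 else 0))"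
      unfolding W_def Wt_def a_def by (rule sum.cong) auto
    thus ?thesis unfolding restr .
  qed
  have sosS: "sos ?I S"
    unfolding S_def using finI by (intro sos_sum sos_sq poly_fun.var) auto
  have sosW: "sos ?I W" unfolding W_def using pa by (intro sos_Wt) auto
  have sosM: "sos ?I (\<lambda>c. 3^d * S c - W c)"
  proof -
    have "sos ?I (\<lambda>c. \<Sum>\<alpha>\<in>?I. (3^d - 3 ^ card \<alpha>) * (c \<alpha>)^2)"
    proof (intro sos_sum sos_scale sos_sq poly_fun.var finI)
      fix \<alpha> assume "\<alpha> \<in> ?I"
      hence "card \<alpha> \<le> d" by (simp add: idx_def)
      thus "0 \<le> (3::real)^d - 3 ^ card \<alpha>" by (simp add: power_increasing)
    qed
    thus ?thesis by (rule sos_cong) (simp add: S_def Wexp sum_distrib_left sum_subtractf algebra_simps)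
  qed
  have sosP: "sos ?I (\<lambda>c. 3^d * S c + W c)"
    by (intro sos_add sos_scale sosS sosW) simp
  have sosMain: "sos ?I (\<lambda>c. W c * W c - expect n (\<lambda>x. (Fp n a c x)^2 * (Fp n a c x)^2))"
    using main_ineq[of ?I n] pa unfolding W_def by blast
  have "sos ?I (\<lambda>c. (3^d * S c - W c) * (3^d * S c + W c) + (W c * W c - expect n (\<lambda>x. (Fp n a c x)^2 * (Fp n a c x)^2)))"
    by (intro sos_add sos_mult sosM sosP sosMain)
  thus ?thesis
  proof (rule sos_cong)
    fix c
    have "(9::real)^d = 3^d * 3^d" by (simp add: power_mult_distrib[symmetric])
    moreover have "expect n (\<lambda>x. (fourier n d c x)^4) = expect n (\<lambda>x. (Fp n a c x)^2 * (Fp n a c x)^2)"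
      by (simp add: F power2_eq_square power4_eq_xxxx mult.assoc)
    ultimately show "9 ^ d * (expect n (\<lambda>x. (fourier n d c x)^2))^2 - expect n (\<lambda>x. (fourier n d c x)^4)
      = (3^d * S c - W c) * (3^d * S c + W c) + (W c * W c - expect n (\<lambda>x. (Fp n a c x)^2 * (Fp n a c x)^2))"
      unfolding E2 by (simp add: power2_eq_square algebra_simps)
  qed
qed

end
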